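(* Assume the two-system setup, let $x_2^s$ be a steady-state map and $(x_1^s,x_2^s(x_1^s))$ a steady state. Then the Jacobian $J$ of the vector field of the predictive-sensitivity system at $(x_1^s,x_2^s(x_1^s))$ is similar to $$\begin{bmatrix}\nabla_{x_1}f_1^r(x_1^s) & \nabla_{x_2}f_1(x_1^s,x_2^s(x_1^s))\\ 0 & \nabla_{x_2}f_2(x_1^s,x_2^s(x_1^s))\end{bmatrix}.$$
   Context: Two-system setup: Let $f_1:\mathbb{R}^{n_1}\times\mathbb{R}^{n_2}\to\mathbb{R}^{n_1}$ and $f_2:\mathbb{R}^{n_1}\times\mathbb{R}^{n_2}\to\mathbb{R}^{n_2}$ be continuously differentiable, and assume $\nabla_{x_2}f_2(x_1,x_2)$ is invertible for all $(x_1,x_2)$. Define the extended sensitivity $S_{x_1}^{x_2}(x_1,x_2):=-\nabla_{x_2}f_2(x_1,x_2)^{-1}\nabla_{x_1}f_2(x_1,x_2)\in\mathbb{R}^{n_2\times n_1}$. The predictive-sensitivity system is $$\begin{bmatrix} I&0\\ -S_{x_1}^{x_2}(x_1,x_2)&I\end{bmatrix}\begin{bmatrix}\dot x_1\\ \dot x_2\end{bmatrix}=\begin{bmatrix}f_1(x_1,x_2)\\ f_2(x_1,x_2)\end{bmatrix},$$ i.e. $\dot x_1=f_1(x_1,x_2)$, $\dot x_2=f_2(x_1,x_2)+S_{x_1}^{x_2}(x_1,x_2)f_1(x_1,x_2)$; it is assumed that this right-hand side is locally Lipschitz continuous. A steady-state map is a continuously differentiable map $x_2^s$ defined on an open set $U\subseteq\mathbb{R}^{n_1}$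 with $f_2(x_1,x_2^s(x_1))=0$ for all $x_1\in U$ (then $\nabla_{x_1}x_2^s(x_1)=S_{x_1}^{x_2}(x_1,x_2^s(x_1))$). The reduced vector field is $f_1^r(x_1):=f_1(x_1,x_2^s(x_1))$, with Jacobian $\nabla_{x_1}f_1^r(x_1)=\nabla_{x_1}f_1(x_1,x_2^s(x_1))+\nabla_{x_2}f_1(x_1,x_2^s(x_1))\nabla_{x_1}x_2^s(x_1)$. A steady state is a point $(x_1^s,x_2^s(x_1^s))$ with $f_1^r(x_1^s)=0$. *)

theory Defs
  imports "HOL-Analysis.Analysis"
begin

text \<open>Matrices are HOL-Analysis matrices: A :: real^'n^'m is an m x n matrix
(rows indexed by 'm), acting by A *v x.\<close>

definition similar_matrix :: "real^'n^'n \<Rightarrow> real^'n^'n \<Rightarrow> bool" where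
  "similar_matrix A B \<longleftrightarrow> (\<exists>P::real^'n^'n. invertible P \<and> A = matrix_inv P ** B ** P)"

definition block_matrix ::
  "real^'a^'a \<Rightarrow> real^'b^'a \<Rightarrow> real^'a^'b \<Rightarrow> real^'b^'b \<Rightarrow> real^('a + 'b)^('a + 'b)" where
  "block_matrix A B C D = (\<chi> i j. case i of
      Inl i1 \<Rightarrow> (case j of Inl j1 \<Rightarrow> A $ i1 $ j1 | Inr j2 \<Rightarrow> B $ i1 $ j2)
    | Inr i2 \<Rightarrow> (case j of Inl j1 \<Rightarrow> C $ i2 $ j1 | Inr j2 \<Rightarrow> D $ i2 $ j2))"

definition locally_lipschitz :: "('a::metric_space \<Rightarrow> 'b::metric_space) \<Rightarrow> bool" where
  "locally_lipschitz F \<longleftrightarrow> (\<forall>z. \<exists>e>0. \<exists>L. \<forall>u\<in>ball z e. \<forall>v\<in>ball z e. dist (F u) (F v) \<le> L * dist u v)"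

end

theory Submission
  imports Defs
begin


lemma mv_bound:
  fixes A :: "real^'n^'m"
  shows "norm (A *v x) \<le> real (CARD('m)) * real (CARD('n)) * norm A * norm x"
proof -
  have "onorm ((*v) A) \<le> real (CARD('m)) * real (CARD('n)) * norm A"
  proof (rule onorm_le_matrix_component)
    fix i j
    have "\<bar>A $ i $ j\<bar> \<le> norm (A $ i)" by (rule component_le_norm_cart)
    also have "\<dots> \<le> norm A" by (rule Finite_Cartesian_Product.norm_nth_le)
    finally show "\<bar>A $ i $ j\<bar> \<le> norm A" .
  qed
  moreover have "norm (A *v x) \<le> onorm ((*v) A) * norm x"
    by (rule onorm) simp
  ultimately show ?thesis
    by (meson mult_right_mono norm_ge_zero order_trans)
qed

lemma matrix_inv_props:
  fixes A :: "real^'n^'n"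
  assumes "invertible A"
  shows "A ** matrix_inv A = mat 1" "matrix_inv A ** A = mat 1"
  using someI_ex[OF assms[unfolded invertible_def]] unfolding matrix_inv_def by auto

lemma inv_bound:
  fixes A :: "'z \<Rightarrow> real^'n^'n"
  assumes lim: "(A \<longlongrightarrow> A0) F" and inv0: "invertible A0"
    and invz: "\<forall>\<^sub>F z in F. invertible (A z)"
  shows "\<exists>C>0. \<forall>\<^sub>F z in F. \<forall>w. norm (matrix_inv (A z) *v w) \<le> C * norm w"
proof -
  define K where "K = real (CARD('n)) * real (CARD('n))"
  have C1: "real (CARD('n)) \<ge> 1"
    using finite_UNIV_card_ge_0[where 'a='n] by simp
  have K1: "K \<ge> 1" unfolding K_def
    using mult_mono[OF C1 C1] by simp
  define c where "c = K * norm (matrix_inv A0) + 1"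
  have c0: "c > 0" using K1 unfolding c_def by (smt (verit) norm_ge_zero mult_nonneg_nonneg)
  have bd0: "norm v \<le> c * norm (A0 *v v)" for v
  proof -
    have "v = matrix_inv A0 *v (A0 *v v)"
      by (simp add: matrix_vector_mul_assoc matrix_inv_props[OF inv0])
    hence "norm v \<le> K * norm (matrix_inv A0) * norm (A0 *v v)"
      using mv_bound[of "matrix_inv A0" "A0 *v v"] unfolding K_def by metis
    also have "\<dots> \<le> c * norm (A0 *v v)"
      unfolding c_def by (simp add: mult_right_mono)
    finally show ?thesis .
  qed
  have "\<forall>\<^sub>F z in F. dist (A z) A0 < 1 / (2 * c * K)"
    using tendstoD[OF lim] c0 K1 by simp
  then have ev: "\<forall>\<^sub>F z in F. norm (A z - A0) < 1 / (2 * c * K) \<and> invertible (A z)"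
    using invz by eventually_elim (simp add: dist_norm)
  have "\<forall>\<^sub>F z in F. \<forall>w. norm (matrix_inv (A z) *v w) \<le> 2 * c * norm w"
    using ev
  proof eventually_elim
    case (elim z)
    show ?case
    proof
      fix w
      define v where "v = matrix_inv (A z) *v w"
      have Av: "A z *v v = w" unfolding v_def
        by (simp add: matrix_vector_mul_assoc matrix_inv_props elim)
      have "norm ((A0 - A z) *v v) \<le> K * norm (A0 - A z) * norm v"
        using mv_bound[of "A0 - A z" v] unfolding K_def by simp
      also have "\<dots> \<le> K * (1 / (2 * c * K)) * norm v"
        using elim K1 by (intro mult_right_mono mult_left_mono) (auto simp: norm_minus_commute less_imp_le)
      also have "\<dots> = norm v / (2 * c)" using K1 c0 by (simp add: field_simps)
      finally have h1: "norm ((A0 - A z) *v v) \<le> norm v / (2 * c)" .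
      have "A0 *v v = A z *v v + (A0 - A z) *v v" by (simp add: algebra_simps)
      hence "norm (A0 *v v) \<le> norm (A z *v v) + norm ((A0 - A z) *v v)"
        by (metis norm_triangle_ineq)
      hence h2: "norm (A0 *v v) \<le> norm w + norm v / (2 * c)"
        using h1 Av by (metis add_left_mono order_trans)
      have "c * norm (A0 *v v) \<le> c * (norm w + norm v / (2 * c))"
        using h2 c0 by (intro mult_left_mono) auto
      also have "\<dots> = c * norm w + norm v / 2" using c0 by (simp add: field_simps)
      finally have "norm v \<le> c * norm w + norm v / 2"
        using bd0[of v] by linarith
      thus "norm (matrix_inv (A z) *v w) \<le> 2 * c * norm w" unfolding v_def by linarith
    qed
  qed
  thus ?thesis using c0 by (intro exI[of _ "2*c"]) auto
qed

lemma deriv_prod_zero: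
  fixes f :: "'a::real_normed_vector \<Rightarrow> real^'n" and N :: "'a \<Rightarrow> real^'n^'m"
  assumes fd: "(f has_derivative f') (at x)" and fx: "f x = 0"
    and eps: "(\<epsilon> \<longlongrightarrow> 0) (at x)"
    and bd: "\<forall>\<^sub>F z in at x. \<forall>y. norm ((N z - N x) *v y) \<le> \<epsilon> z * norm y"
  shows "((\<lambda>z. N z *v f z) has_derivative (\<lambda>h. N x *v f' h)) (at x)"
proof -
  have bl: "bounded_linear f'" using fd by (rule has_derivative_bounded_linear)
  obtain B where B: "\<And>h. norm (f' h) \<le> norm h * B" "B > 0"
    using bounded_linear.pos_bounded[OF bl] by blast
  define q where "q y = norm (f y - f x - f' (y - x)) / norm (y - x)" for y
  have q0: "(q \<longlongrightarrow> 0) (at x)" using fd unfolding has_derivative_iff_norm q_def by blast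
  have qnn: "q y \<ge> 0" for y unfolding q_def by simp
  have R: "((\<lambda>z. (N z - N x) *v f z) has_derivative (\<lambda>h. 0)) (at x)"
    unfolding has_derivative_iff_norm
  proof (intro conjI)
    show "bounded_linear (\<lambda>h::'a. 0::real^'m)" by simp
    show "((\<lambda>y. norm ((N y - N x) *v f y - (N x - N x) *v f x - 0) / norm (y - x)) \<longlongrightarrow> 0) (at x)"
    proof (rule tendsto_sandwich[where f="\<lambda>_. 0" and h="\<lambda>y. \<bar>\<epsilon> y\<bar> * (q y + B)"])
      show "\<forall>\<^sub>F y in at x. 0 \<le> norm ((N y - N x) *v f y - (N x - N x) *v f x - 0) / norm (y - x)"
        by simp
      show "\<forall>\<^sub>F y in at x. norm ((N y - N x) *v f y - (N x - N x) *v f x - 0) / norm (y - x)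
              \<le> \<bar>\<epsilon> y\<bar> * (q y + B)"
        using bd
      proof eventually_elim
        case (elim y)
        show ?case
        proof (cases "y = x")
          case True
          then show ?thesis using qnn[of y] B(2) by simp
        next
          case False
          hence ny: "norm (y - x) > 0" by simp
          have "norm (f y) \<le> norm (f y - f x - f' (y - x)) + norm (f' (y - x))"
            using fx norm_triangle_ineq[of "f y - f x - f' (y - x)" "f' (y - x)"] by simp
          also have "\<dots> \<le> q y * norm (y - x) + B * norm (y - x)"
            using B(1)[of "y - x"] ny unfolding q_def by (simp add: mult.commute)
          finally have fy: "norm (f y) \<le> (q y + B) * norm (y - x)" by (simp add: algebra_simps)
          have "norm ((N y - N x) *v f y) \<le> \<epsilon> y * norm (f y)" using elim by blast
          also have "\<dots> \<le> \<bar>\<epsilon> y\<bar> * norm (f y)" by (simp add: mult_right_mono)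
          also have "\<dots> \<le> \<bar>\<epsilon> y\<bar> * ((q y + B) * norm (y - x))"
            using fy by (simp add: mult_left_mono)
          finally have "norm ((N y - N x) *v f y) \<le> \<bar>\<epsilon> y\<bar> * (q y + B) * norm (y - x)"
            by (simp add: mult.assoc)
          then show ?thesis using ny fx by (simp add: divide_le_eq)
        qed
      qed
      show "((\<lambda>_. 0::real) \<longlongrightarrow> 0) (at x)" by simp
      show "((\<lambda>y. \<bar>\<epsilon> y\<bar> * (q y + B)) \<longlongrightarrow> 0) (at x)"
        using tendsto_mult[OF tendsto_rabs[OF eps] tendsto_add[OF q0 tendsto_const[of B]]] by simp
    qed
  qed
  have L: "((\<lambda>z. N x *v f z) has_derivative (\<lambda>h. N x *v f' h)) (at x)"
    using bounded_linear.has_derivative[OF matrix_vector_mul_bounded_linear fd] .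
  have "((\<lambda>z. N x *v f z + (N z - N x) *v f z) has_derivative (\<lambda>h. N x *v f' h + 0)) (at x)"
    by (rule has_derivative_add[OF L R])
  moreover have "(\<lambda>z. N x *v f z + (N z - N x) *v f z) = (\<lambda>z. N z *v f z)"
    by (simp add: algebra_simps)
  ultimately show ?thesis by simp
qed


lemma sum_UNIV_plus:
  "(\<Sum>k\<in>(UNIV::('a::finite + 'b::finite) set). g k) = (\<Sum>k\<in>UNIV. g (Inl k)) + (\<Sum>k\<in>UNIV. g (Inr k))"
proof -
  have "(\<Sum>k\<in>(UNIV::('a + 'b) set). g k) = (\<Sum>k\<in>(UNIV <+> UNIV). g k)" by simp
  also have "\<dots> = (\<Sum>k\<in>UNIV. g (Inl k)) + (\<Sum>k\<in>UNIV. g (Inr k))"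
    by (subst sum.Plus) auto
  finally show ?thesis .
qed

lemma block_mult:
  "block_matrix A B C D ** block_matrix E F G H =
   block_matrix (A**E + B**G) (A**F + B**H) (C**E + D**G) (C**F + D**H)"
  unfolding matrix_matrix_mult_def block_matrix_def
  by (simp add: vec_eq_iff sum_UNIV_plus split: sum.split)

lemma block_id: "(mat 1 :: real^('a::finite+'b::finite)^('a+'b)) = block_matrix (mat 1) 0 0 (mat 1)"
  unfolding mat_def block_matrix_def
  by (simp add: vec_eq_iff split: sum.split)


lemma swap4: "a + b + (c + d) = a + c + (b + (d::'a::ab_semigroup_add))"
  by (simp add: ac_simps)

lemma vec_id: "- a + c = - (a - b) - (b - (c::'a::ab_group_add))"
  by (simp add: algebra_simps)

lemma deriv_fun_eq:
  fixes A21 :: "real^'n1^'n2" and A22 :: "real^'n2^'n2" and M0 :: "real^'n1^'n2"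
    and A11 :: "real^'n1^'n1" and A12 :: "real^'n2^'n1"
  shows "(\<lambda>h. ((\<lambda>(h1, h2). A11 *v h1 + A12 *v h2) h,
        (\<lambda>(h1, h2). A21 *v h1 + A22 *v h2) h + M0 *v (case h of (h1, h2) \<Rightarrow> A11 *v h1 + A12 *v h2))) =
      (\<lambda>(h1, h2). (A11 *v h1 + A12 *v h2, (A21 + M0 ** A11) *v h1 + (A22 + M0 ** A12) *v h2))"
proof -
  have e: "A21 *v h1 + A22 *v h2 + M0 *v (A11 *v h1 + A12 *v h2)
          = (A21 + M0 ** A11) *v h1 + (A22 + M0 ** A12) *v h2" for h1 h2
    unfolding matrix_vector_mult_add_rdistrib matrix_vector_right_distrib matrix_vector_mul_assoc
    by (rule swap4)
  show ?thesis by (simp only: fun_eq_iff split_paired_All prod.case e simp_thms)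
qed

lemma neg_mv: "(- A) *v x = - (A *v (x::real^'n))"
  by (simp add: matrix_vector_mult_def vec_eq_iff sum_negf)

lemma mm_neg_right: "(A::real^'n^'m) ** (- B) = - (A ** B)"
  by (simp add: matrix_matrix_mult_def vec_eq_iff sum_negf)

lemma mm_neg_left: "(- A::real^'n^'m) ** B = - (A ** B)"
  by (simp add: matrix_matrix_mult_def vec_eq_iff sum_negf)

lemma matrix_add_rdistrib': "((A::real^'n^'m) + B) ** C = A ** C + B ** C"
  by (vector matrix_matrix_mult_def sum.distrib[symmetric] field_simps)


theorem proposition2:
  fixes f1 :: "(real^'n1) \<times> (real^'n2) \<Rightarrow> real^'n1"
    and f2 :: "(real^'n1) \<times> (real^'n2) \<Rightarrow> real^'n2"
    and D11 :: "(real^'n1) \<times> (real^'n2) \<Rightarrow> real^'n1^'n1"  \<comment> \<open>\<nabla>_{x1} f1\<close>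
    and D12 :: "(real^'n1) \<times> (real^'n2) \<Rightarrow> real^'n2^'n1"  \<comment> \<open>\<nabla>_{x2} f1\<close>
    and D21 :: "(real^'n1) \<times> (real^'n2) \<Rightarrow> real^'n1^'n2"  \<comment> \<open>\<nabla>_{x1} f2\<close>
    and D22 :: "(real^'n1) \<times> (real^'n2) \<Rightarrow> real^'n2^'n2"  \<comment> \<open>\<nabla>_{x2} f2\<close>
    and U :: "(real^'n1) set"
    and x2s :: "real^'n1 \<Rightarrow> real^'n2"
    and X :: "real^'n1 \<Rightarrow> real^'n1^'n2"  \<comment> \<open>\<nabla>_{x1} x2s\<close>
    and x1s :: "real^'n1"
  defines "F \<equiv> (\<lambda>z. (f1 z, f2 z + (- (matrix_inv (D22 z) ** D21 z)) *v f1 z))"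
  assumes f1_deriv: "\<And>z. (f1 has_derivative (\<lambda>(h1, h2). D11 z *v h1 + D12 z *v h2)) (at z)"
    and f2_deriv: "\<And>z. (f2 has_derivative (\<lambda>(h1, h2). D21 z *v h1 + D22 z *v h2)) (at z)"
    and D_cont: "continuous_on UNIV D11" "continuous_on UNIV D12"
                "continuous_on UNIV D21" "continuous_on UNIV D22"
    and D22_inv: "\<And>z. invertible (D22 z)"
    and F_lip: "locally_lipschitz F"
    and U_open: "open U"
    and x2s_deriv: "\<And>x1. x1 \<in> U \<Longrightarrow> (x2s has_derivative (\<lambda>h. X x1 *v h)) (at x1)"
    and X_cont: "continuous_on U X"
    and x2s_steady: "\<And>x1. x1 \<in> U \<Longrightarrow> f2 (x1, x2s x1) = 0"
    and x1s_in: "x1s \<in> U"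
    and steady: "f1 (x1s, x2s x1s) = 0"
  shows "\<exists>J11 J12 J21 J22.
           (F has_derivative (\<lambda>(h1, h2). (J11 *v h1 + J12 *v h2, J21 *v h1 + J22 *v h2)))
             (at (x1s, x2s x1s))
         \<and> similar_matrix (block_matrix J11 J12 J21 J22)
             (block_matrix (D11 (x1s, x2s x1s) + D12 (x1s, x2s x1s) ** X x1s)
                           (D12 (x1s, x2s x1s)) 0 (D22 (x1s, x2s x1s)))"
  proof -
  define z0 where "z0 = (x1s, x2s x1s)"
  define M where "M z = - (matrix_inv (D22 z) ** D21 z)" for z
  define Ai0 where "Ai0 = matrix_inv (D22 z0)"
  define M0 where "M0 = M z0"
  have inv0: "invertible (D22 z0)" by (rule D22_inv)
  have pd: "((\<lambda>x1. (x1, x2s x1)) has_derivative (\<lambda>h. (h, X x1s *v h))) (at x1s)"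
    by (rule has_derivative_Pair[OF has_derivative_ident x2s_deriv[OF x1s_in]])
  have g1: "((\<lambda>x1. f2 (x1, x2s x1)) has_derivative
      (\<lambda>h. D21 z0 *v h + D22 z0 *v (X x1s *v h))) (at x1s)"
    using has_derivative_compose[OF pd f2_deriv[of "(x1s, x2s x1s)"]] unfolding z0_def by simp
  have g2: "((\<lambda>x1. f2 (x1, x2s x1)) has_derivative (\<lambda>h. 0)) (at x1s)"
    by (rule has_derivative_transform_within_open[OF has_derivative_const U_open x1s_in])
       (simp add: x2s_steady)
  have "(\<lambda>h. D21 z0 *v h + D22 z0 *v (X x1s *v h)) = (\<lambda>h. 0)"
    by (rule has_derivative_unique[OF g1 g2])
  hence rel: "D21 z0 + D22 z0 ** X x1s = 0"
    unfolding matrix_eq by (simp add: fun_eq_iff algebra_simps matrix_vector_mul_assoc)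
  have M0X: "M0 = X x1s"
  proof -
    have "D21 z0 = - (D22 z0 ** X x1s)" using rel by (simp add: eq_neg_iff_add_eq_0)
    hence "M0 = matrix_inv (D22 z0) ** (D22 z0 ** X x1s)"
      unfolding M0_def M_def by (simp add: mm_neg_right)
    also have "\<dots> = X x1s" by (simp add: matrix_mul_assoc matrix_inv_props[OF inv0])
    finally show ?thesis .
  qed
  have tD: "(D \<longlongrightarrow> D z0) (at z0)" if "continuous_on UNIV D" for D :: "_ \<Rightarrow> real^'b^'c"
    using that continuous_on_eq_continuous_at[of UNIV D] open_UNIV unfolding isCont_def by blast
  obtain C where C0: "C > 0" and
    Cb: "\<forall>\<^sub>F z in at z0. \<forall>w. norm (matrix_inv (D22 z) *v w) \<le> C * norm w"
    using inv_bound[OF tD[OF D_cont(4)] inv0] D22_inv by auto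
  define K1 where "K1 = real CARD('n2) * real CARD('n1)"
  define K2 where "K2 = real CARD('n2) * real CARD('n2)"
  define P where "P = Ai0 ** D21 z0"
  define \<epsilon> where "\<epsilon> z = C * K1 * norm (D21 z - D21 z0) + C * K2 * norm (D22 z0 - D22 z) * (K1 * norm P)" for z
  have K1nn: "K1 \<ge> 0" "K2 \<ge> 0" unfolding K1_def K2_def by auto
  have eps: "(\<epsilon> \<longlongrightarrow> 0) (at z0)"
  proof -
    have a: "((\<lambda>z. norm (D21 z - D21 z0)) \<longlongrightarrow> 0) (at z0)"
      using tendsto_norm_zero[OF Lim_null[THEN iffD1, OF tD[OF D_cont(3)]]] .
    have b: "((\<lambda>z. norm (D22 z0 - D22 z)) \<longlongrightarrow> 0) (at z0)"
      using tendsto_norm_zero[OF Lim_null[THEN iffD1, OF tD[OF D_cont(4)]]]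
      by (simp add: norm_minus_commute)
    show ?thesis unfolding \<epsilon>_def
      using tendsto_add[OF tendsto_mult[OF tendsto_const a] tendsto_mult[OF tendsto_mult[OF tendsto_const b] tendsto_const]]
      by simp
  qed
  have bd: "\<forall>\<^sub>F z in at z0. \<forall>y. norm ((M z - M0) *v y) \<le> \<epsilon> z * norm y"
    using Cb
  proof eventually_elim
    case (elim z)
    show ?case
    proof
      fix y
      define Ai where "Ai = matrix_inv (D22 z)"
      define u where "u = D21 z0 *v y"
      have iz: "Ai ** D22 z = mat 1" unfolding Ai_def by (rule matrix_inv_props(2)[OF D22_inv])
      have i0: "D22 z0 ** Ai0 = mat 1" unfolding Ai0_def by (rule matrix_inv_props(1)[OF inv0])
      have e1: "Ai *v ((D22 z0 - D22 z) *v (Ai0 *v u)) = Ai *v u - Ai0 *v u"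
      proof -
        have "(D22 z0 - D22 z) *v (Ai0 *v u) = u - D22 z *v (Ai0 *v u)"
        proof -
          have "D22 z0 *v (Ai0 *v u) = u" by (simp add: matrix_vector_mul_assoc i0)
          thus ?thesis by (simp add: matrix_vector_mult_diff_rdistrib)
        qed
        hence "Ai *v ((D22 z0 - D22 z) *v (Ai0 *v u)) = Ai *v u - Ai *v (D22 z *v (Ai0 *v u))"
          by (simp add: algebra_simps)
        also have "Ai *v (D22 z *v (Ai0 *v u)) = Ai0 *v u"
          by (simp only: matrix_vector_mul_assoc[of Ai "D22 z"] iz matrix_vector_mul_lid)
        finally show ?thesis .
      qed
      have l: "(M z - M0) *v y = - (Ai *v (D21 z *v y)) + Ai0 *v u"
        unfolding M0_def M_def Ai_def[symmetric] Ai0_def[symmetric] u_def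
        by (simp add: matrix_vector_mult_diff_rdistrib neg_mv matrix_vector_mul_assoc)
      have p: "P *v y = Ai0 *v u" unfolding P_def u_def by (simp add: matrix_vector_mul_assoc)
      have f: "Ai *v ((D21 z - D21 z0) *v y) = Ai *v (D21 z *v y) - Ai *v u"
        unfolding u_def by (simp add: matrix_vector_mult_diff_rdistrib matrix_vector_mult_diff_distrib)
      have eq: "(M z - M0) *v y = - (Ai *v ((D21 z - D21 z0) *v y)) - Ai *v ((D22 z0 - D22 z) *v (P *v y))"
        unfolding l p e1 f by (rule vec_id)
      have n1: "norm (Ai *v ((D21 z - D21 z0) *v y)) \<le> C * (K1 * norm (D21 z - D21 z0) * norm y)"
        using elim[rule_format, of "(D21 z - D21 z0) *v y"] mv_bound[of "D21 z - D21 z0" y] C0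
        unfolding Ai_def K1_def by (meson mult_left_mono less_imp_le order_trans)
      have n2a: "norm (P *v y) \<le> K1 * norm P * norm y"
        using mv_bound[of P y] unfolding K1_def by simp
      have n2b: "norm ((D22 z0 - D22 z) *v (P *v y)) \<le> K2 * norm (D22 z0 - D22 z) * (K1 * norm P * norm y)"
        using mv_bound[of "D22 z0 - D22 z" "P *v y"] n2a K1nn
        unfolding K2_def by (meson mult_left_mono mult_nonneg_nonneg norm_ge_zero order_trans)
      have n2: "norm (Ai *v ((D22 z0 - D22 z) *v (P *v y))) \<le> C * (K2 * norm (D22 z0 - D22 z) * (K1 * norm P * norm y))"
        using elim[rule_format, of "(D22 z0 - D22 z) *v (P *v y)"] n2b C0
        unfolding Ai_def by (meson mult_left_mono less_imp_le order_trans)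
      have "norm ((M z - M0) *v y) \<le> norm (Ai *v ((D21 z - D21 z0) *v y)) + norm (Ai *v ((D22 z0 - D22 z) *v (P *v y)))"
        unfolding eq using norm_triangle_ineq4[of "- (Ai *v ((D21 z - D21 z0) *v y))" "Ai *v ((D22 z0 - D22 z) *v (P *v y))"]
        by (simp only: norm_minus_cancel)
      also have "\<dots> \<le> \<epsilon> z * norm y"
      proof -
        have "\<epsilon> z * norm y = C * (K1 * norm (D21 z - D21 z0) * norm y) + C * (K2 * norm (D22 z0 - D22 z) * (K1 * norm P * norm y))"
          unfolding \<epsilon>_def distrib_right by (simp only: mult.assoc)
        thus ?thesis using n1 n2 by linarith
      qed
      finally show "norm ((M z - M0) *v y) \<le> \<epsilon> z * norm y" .
    qed
  qed
  have dM: "((\<lambda>z. M z *v f1 z) has_derivative (\<lambda>h. M0 *v (case h of (h1, h2) \<Rightarrow> D11 z0 *v h1 + D12 z0 *v h2))) (at z0)"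
    unfolding M0_def
    by (rule deriv_prod_zero[OF f1_deriv _ eps bd[unfolded M0_def]]) (simp add: z0_def steady)
  have dF: "(F has_derivative (\<lambda>(h1, h2). (D11 z0 *v h1 + D12 z0 *v h2,
        (D21 z0 + M0 ** D11 z0) *v h1 + (D22 z0 + M0 ** D12 z0) *v h2))) (at z0)"
  proof (rule has_derivative_eq_rhs)
    show "(F has_derivative (\<lambda>h. ((\<lambda>(h1, h2). D11 z0 *v h1 + D12 z0 *v h2) h,
        (\<lambda>(h1, h2). D21 z0 *v h1 + D22 z0 *v h2) h + M0 *v (case h of (h1, h2) \<Rightarrow> D11 z0 *v h1 + D12 z0 *v h2)))) (at z0)"
      unfolding F_def M_def[symmetric]
      by (rule has_derivative_Pair[OF f1_deriv has_derivative_add[OF f2_deriv dM]])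
    show "(\<lambda>h. ((\<lambda>(h1, h2). D11 z0 *v h1 + D12 z0 *v h2) h,
        (\<lambda>(h1, h2). D21 z0 *v h1 + D22 z0 *v h2) h + M0 *v (case h of (h1, h2) \<Rightarrow> D11 z0 *v h1 + D12 z0 *v h2))) =
      (\<lambda>(h1, h2). (D11 z0 *v h1 + D12 z0 *v h2,
        (D21 z0 + M0 ** D11 z0) *v h1 + (D22 z0 + M0 ** D12 z0) *v h2))"
      by (rule deriv_fun_eq)
  qed
  define Q where "Q = block_matrix (mat 1) 0 (- M0) (mat 1)"
  define Qi where "Qi = block_matrix (mat 1) 0 M0 (mat 1)"
  have QiQ: "Qi ** Q = mat 1"
    unfolding Q_def Qi_def block_mult block_id by (simp add: mm_neg_right)
  have QQi: "Q ** Qi = mat 1" using QiQ matrix_left_right_inverse by blast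
  have invQ: "invertible Q" using QiQ invertible_left_inverse by blast
  have mQ: "matrix_inv Q = Qi"
  proof -
    have "matrix_inv Q = matrix_inv Q ** (Q ** Qi)" by (simp add: QQi)
    also have "\<dots> = Qi" by (simp add: matrix_mul_assoc matrix_inv_props(2)[OF invQ])
    finally show ?thesis .
  qed
  have A21: "D22 z0 ** M0 = - D21 z0" using rel M0X by (simp add: add_eq_0_iff)
  have sim: "block_matrix (D11 z0) (D12 z0) (D21 z0 + M0 ** D11 z0) (D22 z0 + M0 ** D12 z0)
      = matrix_inv Q ** block_matrix (D11 z0 + D12 z0 ** X x1s) (D12 z0) 0 (D22 z0) ** Q"
  proof -
    have BQ: "block_matrix (D11 z0 + D12 z0 ** X x1s) (D12 z0) 0 (D22 z0) ** Q
        = block_matrix (D11 z0) (D12 z0) (D21 z0) (D22 z0)"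
      unfolding Q_def block_mult M0X[symmetric] by (simp add: mm_neg_right A21)
    show ?thesis
      unfolding mQ matrix_mul_assoc[symmetric] BQ unfolding Qi_def block_mult
      by (simp add: add.commute)
  qed
  have simJ: "similar_matrix (block_matrix (D11 z0) (D12 z0) (D21 z0 + M0 ** D11 z0) (D22 z0 + M0 ** D12 z0))
      (block_matrix (D11 z0 + D12 z0 ** X x1s) (D12 z0) 0 (D22 z0))"
    unfolding similar_matrix_def by (rule exI[of _ Q], rule conjI[OF invQ sim])
  show ?thesis
    apply (intro exI conjI)
     apply (rule dF[unfolded z0_def])
    by (rule simJ[unfolded z0_def])
qed

end
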